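(* Let $(\mathcal{Y},\eta)$ be an $(n,m)$-voltage operator, let $\operatorname{Aut}(\mathcal{Y},\eta)$ be the subgroup of $\operatorname{Aut}(\mathcal{Y})$ of all $\tau$ with $\eta(W\tau)=\eta(W)$ for every $W\in\Pi(\mathcal{Y})$, and let $\mathcal{X}$ be an $n$-premaniplex. Let $\operatorname{Aut}(\mathcal{X})$ act on $\mathcal{X}\rtimes_\eta\mathcal{Y}$ by $(x,y)\mapsto(x\alpha,y)$ and $\operatorname{Aut}(\mathcal{Y},\eta)$ by $(x,y)\mapsto(x,y\tau)$. Then the subgroup of $\operatorname{Aut}(\mathcal{X}\rtimes_\eta\mathcal{Y})$ generated by these two groups is $\operatorname{Aut}(\mathcal{X})\times\operatorname{Aut}(\mathcal{Y},\eta)$, acting by $(x,y)(\alpha,\tau)=(x\alpha,y\tau)$.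
   Context: An $n$-premaniplex is an edge-coloured graph (semi-edges and parallel edges allowed) with colours $\{0,\dots,n-1\}$ such that every vertex (flag) is the start of exactly one dart of each colour, and for $|i-j|\ge2$ alternating $i,j$-paths of length 4 are closed; $x^i$ is the $i$-adjacent flag of $x$. $\mathcal{C}^n=\langle r_0,\dots,r_{n-1}\mid r_i^2,\ (r_ir_j)^2\ (|i-j|\ge2)\rangle$ acts on the left on flags by $r_ix=x^i$. Automorphisms act on the right and map paths to paths, $W\mapsto W\tau$. For a flag $y$ of an $m$-premaniplex $\mathcal{Y}$ and $\omega\in\mathcal{C}^m$, $W_\omega(y)$ is the homotopy class of paths from $y$ whose colour sequence $i_1,\dots,i_k$ satisfies $r_{i_k}\cdots r_{i_1}=\omega$; these form the fundamental groupoid $\Pi(\mathcal{Y})$. A voltage assignment $\eta:\Pi(\mathcal{Y})\to\mathcal{C}^n$ satisfies $\eta(W_1W_2)=\eta(W_2)\eta(W_1)$; $(\mathcal{Y},\eta)$ is an $(n,m)$-voltage operator. $\mathcal{X}\rtimes_\eta\mathcal{Y}$ has flags $\mathcal{X}\times\mathcal{Y}$ and $(x,y)^i=(\eta(W_{r_i}(y))x,r_iy)$, $i\in\{0,\dots,m-1\}$. *)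

theory Defs
  imports "HOL-Algebra.Algebra"
begin

text \<open>Words over the colours {0..<n} represent elements of the universal Coxeter group C^n.
  Convention: the word [i1,...,ik] stands for the group element r_ik ... r_i1
  (letters listed in the order they are applied), so concatenation w1 @ w2
  represents the product (element of w2) * (element of w1).\<close>

inductive cox_eq :: "nat \<Rightarrow> nat list \<Rightarrow> nat list \<Rightarrow> bool" for n where
  cox_refl: "cox_eq n w w"
| cox_sym: "cox_eq n u v \<Longrightarrow> cox_eq n v u"
| cox_trans: "cox_eq n u v \<Longrightarrow> cox_eq n v w \<Longrightarrow> cox_eq n u w"
| cox_invol: "i < n \<Longrightarrow> cox_eq n (u @ [i, i] @ v) (u @ v)"
| cox_comm: "i < n \<Longrightarrow> j < n \<Longrightarrow> 2 \<le> (if i \<le> j then j - i else i - j)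
      \<Longrightarrow> cox_eq n (u @ [i, j, i, j] @ v) (u @ v)"

definition premaniplex :: "nat \<Rightarrow> 'a set \<Rightarrow> (nat \<Rightarrow> 'a \<Rightarrow> 'a) \<Rightarrow> bool" where
  "premaniplex n F adj \<longleftrightarrow>
     (\<forall>i<n. \<forall>x\<in>F. adj i x \<in> F \<and> adj i (adj i x) = x) \<and>
     (\<forall>i<n. \<forall>j<n. 2 \<le> (if i \<le> j then j - i else i - j) \<longrightarrow>
        (\<forall>x\<in>F. adj j (adj i (adj j (adj i x))) = x))"

text \<open>Left action of (the element represented by) a word on flags:
  the first letter is applied first, i.e. r_ik ... r_i1 x.\<close>
definition flag_act :: "(nat \<Rightarrow> 'a \<Rightarrow> 'a) \<Rightarrow> nat list \<Rightarrow> 'a \<Rightarrow> 'a" where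
  "flag_act adj w x = foldl (\<lambda>z i. adj i z) x w"

text \<open>A voltage assignment on the fundamental groupoid: the class W_omega(y) is
  represented by the start flag y and any colour word of a path in it
  (a path in a premaniplex is determined by its start and colour sequence).
  eta y w is a word representing eta(W).\<close>
definition voltage_operator ::
  "nat \<Rightarrow> nat \<Rightarrow> 'b set \<Rightarrow> (nat \<Rightarrow> 'b \<Rightarrow> 'b) \<Rightarrow> ('b \<Rightarrow> nat list \<Rightarrow> nat list) \<Rightarrow> bool" where
  "voltage_operator n m FY adjY eta \<longleftrightarrow>
     premaniplex m FY adjY \<and>
     (\<forall>y\<in>FY. \<forall>w\<in>lists {..<m}. eta y w \<in> lists {..<n}) \<and>
     (\<forall>y\<in>FY. \<forall>w\<in>lists {..<m}. \<forall>w'\<in>lists {..<m}.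
        cox_eq m w w' \<longrightarrow> cox_eq n (eta y w) (eta y w')) \<and>
     (\<forall>y\<in>FY. \<forall>w1\<in>lists {..<m}. \<forall>w2\<in>lists {..<m}.
        cox_eq n (eta y (w1 @ w2)) (eta y w1 @ eta (flag_act adjY w1 y) w2))"

text \<open>Adjacency of the voltage product FX \<rtimes>_eta FY on flags FX \<times> FY:
  (x,y)^i = (eta(W_{r_i}(y)) x, r_i y).\<close>
definition prod_adj ::
  "('b \<Rightarrow> nat list \<Rightarrow> nat list) \<Rightarrow> (nat \<Rightarrow> 'a \<Rightarrow> 'a) \<Rightarrow> (nat \<Rightarrow> 'b \<Rightarrow> 'b)
     \<Rightarrow> nat \<Rightarrow> 'a \<times> 'b \<Rightarrow> 'a \<times> 'b" where
  "prod_adj eta adjX adjY i p = (flag_act adjX (eta (snd p) [i]) (fst p), adjY i (snd p))"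

text \<open>Automorphism group of a premaniplex, as a subset of the bijections of the flag set
  (functions are extensional; x tau is written tau x).\<close>
definition aut :: "nat \<Rightarrow> 'a set \<Rightarrow> (nat \<Rightarrow> 'a \<Rightarrow> 'a) \<Rightarrow> ('a \<Rightarrow> 'a) set" where
  "aut n F adj = {t \<in> Bij F. \<forall>x\<in>F. \<forall>i<n. t (adj i x) = adj i (t x)}"

definition aut_eta ::
  "nat \<Rightarrow> nat \<Rightarrow> 'b set \<Rightarrow> (nat \<Rightarrow> 'b \<Rightarrow> 'b) \<Rightarrow> ('b \<Rightarrow> nat list \<Rightarrow> nat list) \<Rightarrow> ('b \<Rightarrow> 'b) set" where
  "aut_eta n m FY adjY eta = {t \<in> aut m FY adjY.
     \<forall>y\<in>FY. \<forall>w\<in>lists {..<m}. cox_eq n (eta (t y) w) (eta y w)}"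

definition liftX :: "'a set \<Rightarrow> 'b set \<Rightarrow> ('a \<Rightarrow> 'a) \<Rightarrow> ('a \<times> 'b \<Rightarrow> 'a \<times> 'b)" where
  "liftX FX FY a = restrict (\<lambda>p. (a (fst p), snd p)) (FX \<times> FY)"

definition liftY :: "'a set \<Rightarrow> 'b set \<Rightarrow> ('b \<Rightarrow> 'b) \<Rightarrow> ('a \<times> 'b \<Rightarrow> 'a \<times> 'b)" where
  "liftY FX FY t = restrict (\<lambda>p. (fst p, t (snd p))) (FX \<times> FY)"

definition lift_pair :: "'a set \<Rightarrow> 'b set \<Rightarrow> ('a \<Rightarrow> 'a) \<times> ('b \<Rightarrow> 'b) \<Rightarrow> ('a \<times> 'b \<Rightarrow> 'a \<times> 'b)" where
  "lift_pair FX FY ab = restrict (\<lambda>p. (fst ab (fst p), snd ab (snd p))) (FX \<times> FY)"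

end

theory Submission
  imports Defs
begin

lemma flag_act_append: "flag_act adj (u @ v) x = flag_act adj v (flag_act adj u x)"
  by (simp add: flag_act_def)

lemma flag_act_Nil[simp]: "flag_act adj [] x = x" by (simp add: flag_act_def)
lemma flag_act_Cons[simp]: "flag_act adj (i # w) x = flag_act adj w (adj i x)" by (simp add: flag_act_def)

lemma flag_act_in:
  assumes "premaniplex n F adj" shows "w \<in> lists {..<n} \<Longrightarrow> x \<in> F \<Longrightarrow> flag_act adj w x \<in> F"
proof (induction w arbitrary: x)
  case (Cons i w) then show ?case using assms by (auto simp: premaniplex_def)
qed simp

lemma cox_filter:
  assumes P: "premaniplex n F adj"
  shows "cox_eq n u v \<Longrightarrow> \<forall>x\<in>F. flag_act adj (filter (\<lambda>i. i<n) u) x = flag_act adj (filter (\<lambda>i. i<n) v) x"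
proof (induction rule: cox_eq.induct)
  case (cox_invol i u v)
  show ?case
  proof
    fix x assume x: "x \<in> F"
    have "flag_act adj (filter (\<lambda>i. i < n) u) x \<in> F" by (rule flag_act_in[OF P]) (auto simp: x)
    then show "flag_act adj (filter (\<lambda>i. i < n) (u @ [i, i] @ v)) x = flag_act adj (filter (\<lambda>i. i < n) (u @ v)) x"
      using cox_invol P by (simp add: flag_act_append premaniplex_def)
  qed
next
  case (cox_comm i j u v)
  show ?case
  proof
    fix x assume x: "x \<in> F"
    have "flag_act adj (filter (\<lambda>i. i < n) u) x \<in> F" by (rule flag_act_in[OF P]) (auto simp: x)
    then show "flag_act adj (filter (\<lambda>i. i < n) (u @ [i, j, i, j] @ v)) x = flag_act adj (filter (\<lambda>i. i < n) (u @ v)) x"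
      using cox_comm P unfolding premaniplex_def by (simp add: flag_act_append)
  qed
qed auto

lemma cox_flag:
  assumes P: "premaniplex n F adj" and "cox_eq n u v" "u \<in> lists {..<n}" "v \<in> lists {..<n}" "x \<in> F"
  shows "flag_act adj u x = flag_act adj v x"
proof -
  have "filter (\<lambda>i. i<n) u = u" "filter (\<lambda>i. i<n) v = v" using assms(3,4) by (auto simp: filter_id_conv)
  then show ?thesis using cox_filter[OF P assms(2)] assms(5) by metis
qed

lemma aut_flag:
  assumes "t \<in> aut n F adj" "w \<in> lists {..<n}" "x \<in> F" "premaniplex n F adj"
  shows "t (flag_act adj w x) = flag_act adj w (t x)"
  using assms(2,3)
proof (induction w arbitrary: x)
  case (Cons i w)
  have "adj i x \<in> F" using Cons assms(4) by (auto simp: premaniplex_def)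
  then show ?case using Cons assms(1) by (auto simp: aut_def)
qed simp

lemma BijGroup_mult: "f \<in> Bij S \<Longrightarrow> g \<in> Bij S \<Longrightarrow> f \<otimes>\<^bsub>BijGroup S\<^esub> g = compose S f g"
  by (simp add: BijGroup_def)

lemma aut_subgroup:
  assumes P: "premaniplex n F adj"
  shows "subgroup (aut n F adj) (BijGroup F)"
proof (rule group.subgroupI[OF group_BijGroup])
  show "aut n F adj \<subseteq> carrier (BijGroup F)" by (auto simp: aut_def BijGroup_def)
  show "aut n F adj \<noteq> {}"
  proof -
    have "(\<lambda>x\<in>F. x) \<in> aut n F adj" using P id_Bij by (auto simp: aut_def premaniplex_def)
    then show ?thesis by blast
  qed
next
  fix t assume t: "t \<in> aut n F adj"
  then have tB: "t \<in> Bij F" by (simp add: aut_def)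
  have inv: "inv\<^bsub>BijGroup F\<^esub> t = (\<lambda>x\<in>F. inv_into F t x)" by (rule inv_BijGroup[OF tB])
  have bb: "bij_betw t F F" using tB by (simp add: Bij_def)
  have "\<forall>x\<in>F. \<forall>i<n. inv_into F t (adj i x) = adj i (inv_into F t x)"
  proof (intro ballI allI impI)
    fix x i assume x: "x \<in> F" and i: "i < n"
    define z where "z = inv_into F t x"
    have z: "z \<in> F" "t z = x" using bb x by (auto simp: z_def bij_betw_def inv_into_into f_inv_into_f)
    have az: "adj i z \<in> F" using P z i by (auto simp: premaniplex_def)
    have "t (adj i z) = adj i x" using t z i by (auto simp: aut_def)
    then have "inv_into F t (adj i x) = adj i z"
      using bb az by (metis bij_betw_def inv_into_f_f)
    then show "inv_into F t (adj i x) = adj i (inv_into F t x)" by (simp add: z_def)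
  qed
  moreover have "\<forall>x\<in>F. \<forall>i<n. adj i x \<in> F" using P by (auto simp: premaniplex_def)
  ultimately show "inv\<^bsub>BijGroup F\<^esub> t \<in> aut n F adj"
    using inv restrict_inv_into_Bij[OF tB] by (auto simp: aut_def)
next
  fix s t assume s: "s \<in> aut n F adj" and t: "t \<in> aut n F adj"
  then have B: "s \<in> Bij F" "t \<in> Bij F" by (auto simp: aut_def)
  have tin: "\<And>x. x \<in> F \<Longrightarrow> t x \<in> F" using B Bij_imp_funcset by blast
  have adjin: "\<forall>x\<in>F. \<forall>i<n. adj i x \<in> F" using P by (auto simp: premaniplex_def)
  show "s \<otimes>\<^bsub>BijGroup F\<^esub> t \<in> aut n F adj"
    using B compose_Bij[OF B] s t tin adjin by (auto simp: BijGroup_mult aut_def compose_def)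
qed

lemma aut_eta_subgroup:
  assumes V: "voltage_operator n m FY adjY eta"
  shows "subgroup (aut_eta n m FY adjY eta) (BijGroup FY)"
proof -
  have P: "premaniplex m FY adjY" using V by (simp add: voltage_operator_def)
  note S = aut_subgroup[OF P]
  show ?thesis
  proof (rule group.subgroupI[OF group_BijGroup])
    show "aut_eta n m FY adjY eta \<subseteq> carrier (BijGroup FY)"
      using subgroup.subset[OF S] by (auto simp: aut_eta_def)
    have "\<one>\<^bsub>BijGroup FY\<^esub> \<in> aut_eta n m FY adjY eta"
      using subgroup.one_closed[OF S] by (auto simp: aut_eta_def BijGroup_def cox_eq.cox_refl)
    then show "aut_eta n m FY adjY eta \<noteq> {}" by blast
  next
    fix t assume t: "t \<in> aut_eta n m FY adjY eta"
    then have ta: "t \<in> aut m FY adjY" and tB: "t \<in> Bij FY" by (auto simp: aut_eta_def aut_def)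
    have inv: "inv\<^bsub>BijGroup FY\<^esub> t = (\<lambda>x\<in>FY. inv_into FY t x)" by (rule inv_BijGroup[OF tB])
    have bb: "bij_betw t FY FY" using tB by (simp add: Bij_def)
    have "\<forall>y\<in>FY. \<forall>w\<in>lists {..<m}. cox_eq n (eta (inv_into FY t y) w) (eta y w)"
    proof (intro ballI)
      fix y w assume y: "y \<in> FY" and w: "w \<in> lists {..<m}"
      define z where "z = inv_into FY t y"
      have z: "z \<in> FY" "t z = y" using bb y by (auto simp: z_def bij_betw_def inv_into_into f_inv_into_f)
      have "cox_eq n (eta (t z) w) (eta z w)" using t z w by (auto simp: aut_eta_def)
      then show "cox_eq n (eta (inv_into FY t y) w) (eta y w)"
        using z by (auto simp: z_def intro: cox_eq.cox_sym)
    qed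
    then show "inv\<^bsub>BijGroup FY\<^esub> t \<in> aut_eta n m FY adjY eta"
      using subgroup.m_inv_closed[OF S ta] inv by (auto simp: aut_eta_def)
  next
    fix s t assume s: "s \<in> aut_eta n m FY adjY eta" and t: "t \<in> aut_eta n m FY adjY eta"
    then have a: "s \<in> aut m FY adjY" "t \<in> aut m FY adjY" and B: "s \<in> Bij FY" "t \<in> Bij FY"
      by (auto simp: aut_eta_def aut_def)
    have tin: "\<And>x. x \<in> FY \<Longrightarrow> t x \<in> FY" using B Bij_imp_funcset by blast
    have "\<forall>y\<in>FY. \<forall>w\<in>lists {..<m}. cox_eq n (eta (s (t y)) w) (eta y w)"
    proof (intro ballI)
      fix y w assume y: "y \<in> FY" and w: "w \<in> lists {..<m}"
      have "cox_eq n (eta (s (t y)) w) (eta (t y) w)" using s tin[OF y] w by (auto simp: aut_eta_def)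
      moreover have "cox_eq n (eta (t y) w) (eta y w)" using t y w by (auto simp: aut_eta_def)
      ultimately show "cox_eq n (eta (s (t y)) w) (eta y w)" by (rule cox_eq.cox_trans)
    qed
    then show "s \<otimes>\<^bsub>BijGroup FY\<^esub> t \<in> aut_eta n m FY adjY eta"
      using subgroup.m_closed[OF S a] B by (auto simp: aut_eta_def BijGroup_mult compose_def)
  qed
qed

lemma lp_Bij:
  assumes "a \<in> Bij FX" "b \<in> Bij FY" shows "lift_pair FX FY (a,b) \<in> Bij (FX \<times> FY)"
proof -
  have "bij_betw (map_prod a b) (FX \<times> FY) (FX \<times> FY)"
    using assms by (intro bij_betw_map_prod) (auto simp: Bij_def)
  then have "bij_betw (lift_pair FX FY (a,b)) (FX \<times> FY) (FX \<times> FY)"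
    by (rule bij_betw_cong[THEN iffD1, rotated]) (auto simp: lift_pair_def)
  then show ?thesis by (simp add: Bij_def lift_pair_def)
qed

lemma lp_mult:
  assumes "a \<in> Bij FX" "c \<in> Bij FX" "b \<in> Bij FY" "d \<in> Bij FY"
  shows "lift_pair FX FY (compose FX a c, compose FY b d)
       = lift_pair FX FY (a,b) \<otimes>\<^bsub>BijGroup (FX \<times> FY)\<^esub> lift_pair FX FY (c,d)"
proof -
  have "c x \<in> FX" if "x \<in> FX" for x using assms(2) that Bij_imp_funcset by blast
  moreover have "d x \<in> FY" if "x \<in> FY" for x using assms(4) that Bij_imp_funcset by blast
  ultimately show ?thesis
    using lp_Bij[OF assms(1,3)] lp_Bij[OF assms(2,4)]
    by (auto simp: BijGroup_mult lift_pair_def compose_def intro!: ext)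
qed

lemma liftX_lp: "liftX FX FY a = lift_pair FX FY (a, \<lambda>y\<in>FY. y)"
  by (auto simp: liftX_def lift_pair_def intro!: ext)
lemma liftY_lp: "liftY FX FY b = lift_pair FX FY (\<lambda>x\<in>FX. x, b)"
  by (auto simp: liftY_def lift_pair_def intro!: ext)

lemma lp_comp: "lift_pair FX FY (a, \<lambda>y\<in>FY. y) \<otimes>\<^bsub>BijGroup (FX \<times> FY)\<^esub> lift_pair FX FY (\<lambda>x\<in>FX. x, b)
   = lift_pair FX FY (a, b)" if "a \<in> Bij FX" "b \<in> Bij FY"
proof -
  have "lift_pair FX FY (a, b) = lift_pair FX FY (compose FX a (\<lambda>x\<in>FX. x), compose FY (\<lambda>y\<in>FY. y) b)"
    using compose_Id[OF Bij_imp_funcset[OF that(1)] Bij_imp_extensional[OF that(1)]]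
      Id_compose[OF Bij_imp_funcset[OF that(2)] Bij_imp_extensional[OF that(2)]] by simp
  then show ?thesis using lp_mult[OF that(1) id_Bij id_Bij that(2)] by simp
qed

lemma lp_inj:
  assumes "FX \<noteq> {}" "FY \<noteq> {}"
  shows "inj_on (lift_pair FX FY) (Bij FX \<times> Bij FY)"
proof (rule inj_onI)
  fix p q assume p: "p \<in> Bij FX \<times> Bij FY" and q: "q \<in> Bij FX \<times> Bij FY"
    and eq0: "lift_pair FX FY p = lift_pair FX FY q"
  obtain a b c d where pq: "p = (a,b)" "q = (c,d)" by fastforce
  have B: "a \<in> Bij FX" "b \<in> Bij FY" "c \<in> Bij FX" "d \<in> Bij FY" using p q pq by auto
  have eq: "lift_pair FX FY (a, b) = lift_pair FX FY (c, d)" using eq0 pq by simp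
  obtain x0 y0 where x0: "x0 \<in> FX" and y0: "y0 \<in> FY" using assms by blast
  have "a x = c x" if "x \<in> FX" for x
    using fun_cong[OF eq, of "(x,y0)"] that y0 by (simp add: lift_pair_def)
  then have ac: "a = c" using B by (intro extensionalityI[of _ FX]) (auto dest: Bij_imp_extensional)
  have "b y = d y" if "y \<in> FY" for y
    using fun_cong[OF eq, of "(x0,y)"] that x0 by (simp add: lift_pair_def)
  then have "b = d" using B by (intro extensionalityI[of _ FY]) (auto dest: Bij_imp_extensional)
  then show "p = q" using ac pq by simp
qed

theorem corollary6p2:
  fixes n m :: nat
    and FX :: "'a set" and adjX :: "nat \<Rightarrow> 'a \<Rightarrow> 'a"
    and FY :: "'b set" and adjY :: "nat \<Rightarrow> 'b \<Rightarrow> 'b"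
    and eta :: "'b \<Rightarrow> nat list \<Rightarrow> nat list"
  assumes "premaniplex n FX adjX" and "FX \<noteq> {}"
    and "voltage_operator n m FY adjY eta" and "FY \<noteq> {}"
  shows "liftX FX FY ` aut n FX adjX \<subseteq> aut m (FX \<times> FY) (prod_adj eta adjX adjY) \<and>
         liftY FX FY ` aut_eta n m FY adjY eta \<subseteq> aut m (FX \<times> FY) (prod_adj eta adjX adjY) \<and>
         carrier (subgroup_generated (BijGroup (FX \<times> FY))
            (liftX FX FY ` aut n FX adjX \<union> liftY FX FY ` aut_eta n m FY adjY eta))
          = lift_pair FX FY ` (aut n FX adjX \<times> aut_eta n m FY adjY eta) \<and>
         lift_pair FX FY \<in> iso
           (DirProd ((BijGroup FX)\<lparr>carrier := aut n FX adjX\<rparr>)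
                    ((BijGroup FY)\<lparr>carrier := aut_eta n m FY adjY eta\<rparr>))
           (subgroup_generated (BijGroup (FX \<times> FY))
              (liftX FX FY ` aut n FX adjX \<union> liftY FX FY ` aut_eta n m FY adjY eta))"
proof -
  note PX = assms(1)
  note V = assms(3)
  have PY: "premaniplex m FY adjY" using V by (simp add: voltage_operator_def)
  have eta_l: "eta y [i] \<in> lists {..<n}" if "y \<in> FY" "i < m" for y i
    using V that by (auto simp: voltage_operator_def)
  have adjYin: "adjY i y \<in> FY" if "y \<in> FY" "i < m" for y i using PY that by (auto simp: premaniplex_def)
  define A where "A = aut n FX adjX"
  define B where "B = aut_eta n m FY adjY eta"
  define G where "G = BijGroup (FX \<times> FY)"
  define S where "S = liftX FX FY ` A \<union> liftY FX FY ` B"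
  have SA: "subgroup A (BijGroup FX)" unfolding A_def by (rule aut_subgroup[OF PX])
  have SB: "subgroup B (BijGroup FY)" unfolding B_def by (rule aut_eta_subgroup[OF V])
  have AB: "a \<in> Bij FX" if "a \<in> A" for a using subgroup.subset[OF SA] that by (auto simp: BijGroup_def)
  have BB: "b \<in> Bij FY" if "b \<in> B" for b using subgroup.subset[OF SB] that by (auto simp: BijGroup_def)
  have pin: "prod_adj eta adjX adjY i (x,y) \<in> FX \<times> FY" if "x \<in> FX" "y \<in> FY" "i < m" for x y i
    using flag_act_in[OF PX eta_l[OF that(2,3)] that(1)] adjYin[OF that(2,3)]
    by (simp add: prod_adj_def)
  have part1: "liftX FX FY ` A \<subseteq> aut m (FX \<times> FY) (prod_adj eta adjX adjY)"
  proof clarify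
    fix a assume a: "a \<in> A"
    have "liftX FX FY a \<in> Bij (FX \<times> FY)" unfolding liftX_lp by (rule lp_Bij[OF AB[OF a] id_Bij])
    moreover have "liftX FX FY a (prod_adj eta adjX adjY i (x,y)) = prod_adj eta adjX adjY i (liftX FX FY a (x,y))"
      if "x \<in> FX" "y \<in> FY" "i < m" for x y i
    proof -
      have ax: "a x \<in> FX" using AB[OF a] that(1) Bij_imp_funcset by blast
      show ?thesis using pin[OF that] pin[OF ax that(2,3)] that ax
          aut_flag[of a n FX adjX, OF a[unfolded A_def] eta_l[OF that(2,3)] that(1) PX]
        by (simp add: liftX_def prod_adj_def)
    qed
    ultimately show "liftX FX FY a \<in> aut m (FX \<times> FY) (prod_adj eta adjX adjY)"
      by (auto simp: aut_def)
  qed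
  have part2: "liftY FX FY ` B \<subseteq> aut m (FX \<times> FY) (prod_adj eta adjX adjY)"
  proof clarify
    fix b assume b: "b \<in> B"
    have "liftY FX FY b \<in> Bij (FX \<times> FY)" unfolding liftY_lp by (rule lp_Bij[OF id_Bij BB[OF b]])
    moreover have "liftY FX FY b (prod_adj eta adjX adjY i (x,y)) = prod_adj eta adjX adjY i (liftY FX FY b (x,y))"
      if "x \<in> FX" "y \<in> FY" "i < m" for x y i
    proof -
      have byin: "b y \<in> FY" using BB[OF b] that(2) Bij_imp_funcset by blast
      have c: "cox_eq n (eta (b y) [i]) (eta y [i])" using b that by (auto simp: B_def aut_eta_def)
      have f: "flag_act adjX (eta (b y) [i]) x = flag_act adjX (eta y [i]) x"
        by (rule cox_flag[OF PX c eta_l[OF byin that(3)] eta_l[OF that(2,3)] that(1)])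
      have comm: "b (adjY i y) = adjY i (b y)" using b that by (auto simp: B_def aut_eta_def aut_def)
      show ?thesis using pin[OF that] pin[OF that(1) byin that(3)] that byin f comm
        by (simp add: liftY_def prod_adj_def)
    qed
    ultimately show "liftY FX FY b \<in> aut m (FX \<times> FY) (prod_adj eta adjX adjY)"
      by (auto simp: aut_def)
  qed
  define D where "D = DirProd ((BijGroup FX)\<lparr>carrier := A\<rparr>) ((BijGroup FY)\<lparr>carrier := B\<rparr>)"
  have gD: "group D" unfolding D_def
    by (intro DirProd_group subgroup.subgroup_is_group[OF SA group_BijGroup]
        subgroup.subgroup_is_group[OF SB group_BijGroup])
  have cD: "carrier D = A \<times> B" by (simp add: D_def DirProd_def)
  have lpmul: "lift_pair FX FY (p \<otimes>\<^bsub>D\<^esub> q) = lift_pair FX FY p \<otimes>\<^bsub>G\<^esub> lift_pair FX FY q"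
    if "p \<in> carrier D" "q \<in> carrier D" for p q
    using that lp_mult[of "fst p" FX "fst q" "snd p" FY "snd q"] AB BB unfolding cD
    by (auto simp: D_def DirProd_def BijGroup_mult G_def)
  have hom: "lift_pair FX FY \<in> hom D G"
  proof (rule homI)
    fix p assume "p \<in> carrier D"
    then show "lift_pair FX FY p \<in> carrier G"
      using AB BB by (auto simp: cD G_def BijGroup_def intro!: lp_Bij)
  qed (rule lpmul)
  have gh: "group_hom D G (lift_pair FX FY)"
    using hom by (simp add: group_hom_def group_hom_axioms_def gD G_def group_BijGroup)
  have subL: "subgroup (lift_pair FX FY ` (A \<times> B)) G"
    using group_hom.img_is_subgroup[OF gh] by (simp add: cD)
  have gG: "group G" by (simp add: G_def group_BijGroup)
  have SL: "S \<subseteq> lift_pair FX FY ` (A \<times> B)"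
  proof -
    have "liftX FX FY a \<in> lift_pair FX FY ` (A \<times> B)" if "a \<in> A" for a
      using that subgroup.one_closed[OF SB] by (auto simp: liftX_lp BijGroup_def)
    moreover have "liftY FX FY b \<in> lift_pair FX FY ` (A \<times> B)" if "b \<in> B" for b
      using that subgroup.one_closed[OF SA] by (auto simp: liftY_lp BijGroup_def)
    ultimately show ?thesis by (auto simp: S_def)
  qed
  have SG: "S \<subseteq> carrier G"
    using SL subgroup.subset[OF subL] by blast
  have car: "carrier (subgroup_generated G S) = lift_pair FX FY ` (A \<times> B)"
  proof
    show "carrier (subgroup_generated G S) \<subseteq> lift_pair FX FY ` (A \<times> B)"
      by (rule group.subgroup_generated_minimal[OF gG subL SL])
    show "lift_pair FX FY ` (A \<times> B) \<subseteq> carrier (subgroup_generated G S)"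
    proof clarify
      fix a b assume a: "a \<in> A" and b: "b \<in> B"
      have inS: "S \<subseteq> carrier (subgroup_generated G S)"
        by (rule group.subgroup_generated_subset_carrier_subset[OF gG SG])
      have "liftX FX FY a \<in> carrier (subgroup_generated G S)" using inS a by (auto simp: S_def)
      moreover have "liftY FX FY b \<in> carrier (subgroup_generated G S)" using inS b by (auto simp: S_def)
      ultimately have "liftX FX FY a \<otimes>\<^bsub>G\<^esub> liftY FX FY b \<in> carrier (subgroup_generated G S)"
        using subgroup.m_closed[OF group.subgroup_subgroup_generated[OF gG]] by blast
      then show "lift_pair FX FY (a, b) \<in> carrier (subgroup_generated G S)"
        using lp_comp[OF AB[OF a] BB[OF b]] by (simp add: liftX_lp liftY_lp G_def)
    qed
  qed
  have iso: "lift_pair FX FY \<in> iso D (subgroup_generated G S)"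
  proof -
    have "lift_pair FX FY \<in> hom D (subgroup_generated G S)"
      using hom car cD by (auto simp: hom_def)
    moreover have "inj_on (lift_pair FX FY) (carrier D)"
      unfolding cD by (rule inj_on_subset[OF lp_inj[OF assms(2,4)]]) (use AB BB in auto)
    ultimately show ?thesis using car cD by (auto simp: iso_def bij_betw_def)
  qed
  show ?thesis
    using part1 part2 car iso by (simp add: A_def B_def G_def S_def D_def)
qed

end
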